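(* Let $q$ be a prime power and $1\le s<t$ integers. If there exists a linear OA$(s,t,q)$, then there exist a linear AOA$(s,t,t,q)$ and a linear AOA$(t-s,t,t,q)$.
   Context: An orthogonal array OA$(t,k,v)$ (with $1\le t\le k$) is a $v^t\times k$ array with entries from a set $X$ of size $v$ such that, for every choice of $t$ of its columns, each $t$-tuple in $X^t$ appears exactly once as a row of the corresponding $v^t\times t$ subarray. For integers $1\le s\le t\le k$, an augmented orthogonal array AOA$(s,t,k,v)$ is a $v^t\times(k+1)$ array $A$ such that: (1) the first $k$ columns of $A$ form an OA$(t,k,v)$ on a symbol set $X$ of size $v$; (2) the last column of $A$ has entries from a set $Y$ of size $v^{t-s}$; (3) for any choice of $s$ of the first $k$ columns, these $s$ columns together with the last column contain every $(s+1)$-tuple of $X^s\times Y$ exactly once as a row. For a prime power $q$, an OA$(t,k,q)$ over $\mathbb{F}_q$ is linear if its set of rows is a $t$-dimensional $\mathbb{F}_q$-subspace of $\mathbb{F}_q^k$; an AOA$(s,t,k,q)$ is linear if $X=\mathbb{F}_q$, $Y=\mathbb{F}_q^{t-s}$, and its set of rows, regarded as vectors in $\mathbb{F}_q^{k}\times\mathbb{F}_q^{t-s}=\mathbb{F}_q^{k+t-s}$, is an $\mathbb{F}_q$-linear subspace. *)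

theory Defs
  imports "HOL-Library.FuncSet"
begin

text \<open>Arrays are lists of rows; a row of an array with k columns is a list of length k.
  Column indices are 0..<k. A choice of t columns is a t-element subset of {0..<k}.\<close>

definition is_OA :: "nat \<Rightarrow> nat \<Rightarrow> 'a set \<Rightarrow> 'a list list \<Rightarrow> bool" where
  "is_OA t k X A \<longleftrightarrow>
     1 \<le> t \<and> t \<le> k \<and> finite X \<and>
     length A = card X ^ t \<and>
     (\<forall>r\<in>set A. length r = k \<and> set r \<subseteq> X) \<and>
     (\<forall>S. S \<subseteq> {0..<k} \<and> card S = t \<longrightarrow>
        (\<forall>u \<in> S \<rightarrow>\<^sub>E X. length (filter (\<lambda>r. \<forall>i\<in>S. r ! i = u i) A) = 1))"

text \<open>Augmented orthogonal array AOA(s,t,k,v): rows are pairs (first k entries, last entry).\<close>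

definition is_AOA :: "nat \<Rightarrow> nat \<Rightarrow> nat \<Rightarrow> 'a set \<Rightarrow> 'b set \<Rightarrow> ('a list \<times> 'b) list \<Rightarrow> bool" where
  "is_AOA s t k X Y A \<longleftrightarrow>
     1 \<le> s \<and> s \<le> t \<and> t \<le> k \<and>
     is_OA t k X (map fst A) \<and>
     finite Y \<and> card Y = card X ^ (t - s) \<and>
     (\<forall>r\<in>set A. snd r \<in> Y) \<and>
     (\<forall>S. S \<subseteq> {0..<k} \<and> card S = s \<longrightarrow>
        (\<forall>u \<in> S \<rightarrow>\<^sub>E X. \<forall>y\<in>Y.
           length (filter (\<lambda>r. (\<forall>i\<in>S. fst r ! i = u i) \<and> snd r = y) A) = 1))"

text \<open>F_q^n represented as lists of length n; linear subspace with componentwise operations.\<close>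

definition lin_subspace :: "nat \<Rightarrow> 'a::field list set \<Rightarrow> bool" where
  "lin_subspace n V \<longleftrightarrow>
     (\<forall>x\<in>V. length x = n) \<and>
     replicate n 0 \<in> V \<and>
     (\<forall>x\<in>V. \<forall>y\<in>V. map2 (+) x y \<in> V) \<and>
     (\<forall>c. \<forall>x\<in>V. map ((*) c) x \<in> V)"

text \<open>Linear OA(t,k,q): rows form a t-dimensional subspace of F_q^k. A subspace of F_q^k
  has dimension t iff it has q^t elements.\<close>

definition linear_OA :: "nat \<Rightarrow> nat \<Rightarrow> 'a::{finite,field} list list \<Rightarrow> bool" where
  "linear_OA t k A \<longleftrightarrow>
     is_OA t k (UNIV :: 'a set) A \<and> lin_subspace k (set A) \<and>
     card (set A) = card (UNIV :: 'a set) ^ t"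

text \<open>Linear AOA(s,t,k,q): X = F_q, Y = F_q^(t-s), rows (as vectors in F_q^(k+t-s)) form a subspace.\<close>

definition linear_AOA :: "nat \<Rightarrow> nat \<Rightarrow> nat \<Rightarrow> ('a::{finite,field} list \<times> 'a list) list \<Rightarrow> bool" where
  "linear_AOA s t k A \<longleftrightarrow>
     is_AOA s t k (UNIV :: 'a set) {y. length y = t - s} A \<and>
     lin_subspace (k + (t - s)) ((\<lambda>(r, y). r @ y) ` set A)"

end

theory Submission
  imports Defs
begin

lemma restrict_eq_PiE:
  assumes "u \<in> S \<rightarrow>\<^sub>E T"
  shows "(restrict f S = u) \<longleftrightarrow> (\<forall>i\<in>S. f i = u i)"
proof
  assume "restrict f S = u" then show "\<forall>i\<in>S. f i = u i" by auto
next
  assume H: "\<forall>i\<in>S. f i = u i"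
  show "restrict f S = u"
  proof
    fix i show "restrict f S i = u i"
      using H assms by (cases "i \<in> S") (auto simp: PiE_def extensional_def)
  qed
qed

lemma gen:
  fixes h :: "'a::{finite,field} list \<Rightarrow> 'a list" and p n m :: nat
  assumes p1: "1 \<le> p" and pn: "p \<le> n" and mdef: "m = n - p"
    and hlen: "\<And>x. length x = n \<Longrightarrow> length (h x) = m"
    and hadd: "\<And>x y. length x = n \<Longrightarrow> length y = n \<Longrightarrow> h (map2 (+) x y) = map2 (+) (h x) (h y)"
    and hsmul: "\<And>c x. length x = n \<Longrightarrow> h (map ((*) c) x) = map ((*) c) (h x)"
    and hker: "\<And>S x. S \<subseteq> {0..<n} \<Longrightarrow> card S = p \<Longrightarrow> length x = n \<Longrightarrow> (\<forall>i\<in>S. x!i = 0)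
                 \<Longrightarrow> h x = replicate m 0 \<Longrightarrow> x = replicate n 0"
  shows "\<exists>B :: ('a list \<times> 'a list) list. linear_AOA p n n B"
proof -
  define D where "D = {x::'a list. length x = n}"
  have Deq: "D = {xs. set xs \<subseteq> UNIV \<and> length xs = n}" by (simp add: D_def)
  have finD: "finite D" unfolding Deq by (rule finite_lists_length_eq) simp
  have cardD: "card D = card (UNIV::'a set) ^ n" unfolding Deq by (rule card_lists_length_eq) simp
  obtain L where L: "distinct L" "set L = D" using finite_distinct_list[OF finD] by blast
  define B where "B = map (\<lambda>x. (x, h x)) L"
  have lenL: "length L = card (UNIV::'a set)^n" using L cardD distinct_card by metis
  have mapfst: "map fst B = L" by (simp add: B_def comp_def)
  have cnt: "\<And>P. length (filter P L) = card {x\<in>D. P x}"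
    using distinct_length_filter[OF L(1)] L(2) by (simp add: Collect_conj_eq Int_commute)
  define Y where "Y = {y::'a list. length y = m}"
  have finY: "finite Y" using finite_lists_length_eq[of "UNIV::'a set" m] by (simp add: Y_def)
  have cardY: "card Y = card (UNIV::'a set) ^ m" using card_lists_length_eq[of "UNIV::'a set" m] by (simp add: Y_def)
  have inj: "inj_on (\<lambda>x. (restrict (\<lambda>i. x!i) S, h x)) D"
    if S: "S \<subseteq> {0..<n}" "card S = p" for S
  proof (rule inj_onI)
    fix x x' assume xD: "x \<in> D" and xD': "x' \<in> D"
      and eq: "(restrict (\<lambda>i. x!i) S, h x) = (restrict (\<lambda>i. x'!i) S, h x')"
    have lx: "length x = n" "length x' = n" using xD xD' by (auto simp: D_def)
    have xS: "x!i = x'!i" if "i \<in> S" for i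
      using eq that by (metis (no_types, lifting) Pair_inject restrict_apply')
    define d where "d = map2 (+) x (map ((*) (-1)) x')"
    have ld: "length d = n" using lx by (simp add: d_def)
    have dS: "\<forall>i\<in>S. d!i = 0"
    proof
      fix i assume i: "i \<in> S" then have "i < n" using S by auto
      then show "d!i = 0" using xS[OF i] lx by (simp add: d_def)
    qed
    have hx: "h x = h x'" using eq by simp
    have "h d = map2 (+) (h x) (map ((*) (-1)) (h x'))"
      unfolding d_def using lx by (simp add: hadd hsmul)
    also have "\<dots> = replicate m 0"
      using hx hlen[OF lx(2)] by (intro nth_equalityI) auto
    finally have "d = replicate n 0" using hker[OF S ld dS] by simp
    then have "\<forall>i<n. x!i = x'!i"
    proof (intro allI impI)
      fix i assume "d = replicate n 0" "i < n"
      then have "d!i = 0" by simp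
      then have "x!i + - (x'!i) = 0" using \<open>i<n\<close> lx by (simp add: d_def)
      then show "x!i = x'!i" by (metis add_diff_cancel_right add_diff_eq diff_add_cancel diff_self eq_iff_diff_eq_0 add_uminus_conv_diff)
    qed
    then show "x = x'" using lx by (intro nth_equalityI) auto
  qed
  have img: "(\<lambda>x. (restrict (\<lambda>i. x!i) S, h x)) ` D = (S \<rightarrow>\<^sub>E UNIV) \<times> Y"
    if S: "S \<subseteq> {0..<n}" "card S = p" for S
  proof (rule card_subset_eq)
    have finS: "finite S" using S finite_subset by blast
    show "finite ((S \<rightarrow>\<^sub>E (UNIV::'a set)) \<times> Y)" using finS finY by (intro finite_cartesian_product finite_PiE) auto
    show "(\<lambda>x. (restrict (\<lambda>i. x!i) S, h x)) ` D \<subseteq> (S \<rightarrow>\<^sub>E (UNIV::'a set)) \<times> Y"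
      using hlen by (auto simp: D_def Y_def)
    have "card ((\<lambda>x. (restrict (\<lambda>i. x!i) S, h x)) ` D) = card (UNIV::'a set)^n"
      using card_image[OF inj[OF S]] cardD by simp
    moreover have "card ((S \<rightarrow>\<^sub>E (UNIV::'a set)) \<times> Y) = card (UNIV::'a set)^p * card (UNIV::'a set)^m"
      using finS S by (simp add: card_cartesian_product card_PiE cardY)
    moreover have "card (UNIV::'a set)^p * card (UNIV::'a set)^m = card (UNIV::'a set)^n"
      using pn mdef by (simp add: power_add[symmetric])
    ultimately show "card ((\<lambda>x. (restrict (\<lambda>i. x!i) S, h x)) ` D) = card ((S \<rightarrow>\<^sub>E (UNIV::'a set)) \<times> Y)"
      by simp
  qed
  have one: "card {x\<in>D. (\<forall>i\<in>S. x!i = u i) \<and> h x = y} = 1"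
    if S: "S \<subseteq> {0..<n}" "card S = p" and u: "u \<in> S \<rightarrow>\<^sub>E UNIV" and y: "y \<in> Y" for S u y
  proof -
    have "(u, y) \<in> (\<lambda>x. (restrict (\<lambda>i. x!i) S, h x)) ` D" using img[OF S] u y by simp
    then obtain x0 where x0: "x0 \<in> D" "restrict (\<lambda>i. x0!i) S = u" "h x0 = y" by auto
    have "{x\<in>D. (\<forall>i\<in>S. x!i = u i) \<and> h x = y} = {x0}"
    proof (intro equalityI subsetI)
      fix x assume "x \<in> {x\<in>D. (\<forall>i\<in>S. x!i = u i) \<and> h x = y}"
      then have xD: "x \<in> D" and "restrict (\<lambda>i. x!i) S = u" "h x = y"
        using restrict_eq_PiE[OF u] by auto
      then have "(restrict (\<lambda>i. x!i) S, h x) = (restrict (\<lambda>i. x0!i) S, h x0)" using x0 by simp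
      then show "x \<in> {x0}" using inj_onD[OF inj[OF S] _ xD x0(1)] by simp
    next
      fix x assume "x \<in> {x0}"
      then show "x \<in> {x\<in>D. (\<forall>i\<in>S. x!i = u i) \<and> h x = y}"
        using x0 restrict_eq_PiE[OF u, of "\<lambda>i. x0!i"] by auto
    qed
    then show ?thesis by simp
  qed
  have OA: "is_OA n n (UNIV::'a set) L"
    unfolding is_OA_def
  proof (intro conjI ballI allI impI)
    show "1 \<le> n" using p1 pn by simp
    show "n \<le> n" by simp
    show "finite (UNIV::'a set)" by simp
    show "length L = card (UNIV::'a set) ^ n" using lenL by simp
    fix r assume "r \<in> set L" then show "length r = n" "set r \<subseteq> UNIV" using L by (auto simp: D_def)
  next
    fix S :: "nat set" and u :: "nat \<Rightarrow> 'a" assume S: "S \<subseteq> {0..<n} \<and> card S = n" and u: "u \<in> S \<rightarrow>\<^sub>E UNIV"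
    have Sn: "S = {0..<n}" using S by (metis card_atLeastLessThan card_subset_eq diff_zero finite_atLeastLessThan)
    have "{x\<in>D. \<forall>i\<in>S. x!i = u i} = {map u [0..<n]}"
    proof (intro equalityI subsetI)
      fix x assume "x \<in> {x\<in>D. \<forall>i\<in>S. x!i = u i}"
      then show "x \<in> {map u [0..<n]}" using Sn by (auto simp: D_def intro!: nth_equalityI)
    qed (use Sn in \<open>auto simp: D_def\<close>)
    then show "length (filter (\<lambda>r. \<forall>i\<in>S. r ! i = u i) L) = 1" by (simp add: cnt)
  qed
  have setB: "set B = (\<lambda>x. (x, h x)) ` D" using L by (simp add: B_def)
  have img2: "(\<lambda>(r, y). r @ y) ` set B = (\<lambda>x. x @ h x) ` D" by (auto simp: setB)
  have h0: "h (replicate n 0) = replicate m 0"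
  proof -
    have "h (replicate n 0) = h (map ((*) 0) (replicate n (0::'a)))" by simp
    also have "\<dots> = map ((*) 0) (h (replicate n 0))" by (rule hsmul) simp
    also have "\<dots> = replicate m 0" using hlen[of "replicate n 0"] by (intro nth_equalityI) auto
    finally show ?thesis .
  qed
  have LS: "lin_subspace (n + (n - p)) ((\<lambda>(r, y). r @ y) ` set B)"
    unfolding img2 lin_subspace_def
  proof (intro conjI ballI allI)
    fix z assume "z \<in> (\<lambda>x. x @ h x) ` D" then show "length z = n + (n - p)"
      using hlen mdef by (auto simp: D_def)
  next
    have "replicate (n + (n-p)) (0::'a) = replicate n 0 @ h (replicate n 0)"
      using h0 mdef by (simp add: replicate_add)
    then show "replicate (n + (n - p)) 0 \<in> (\<lambda>x. x @ h x) ` D" by (auto simp: D_def)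
  next
    fix z w assume z: "z \<in> (\<lambda>x. x @ h x) ` D" and w: "w \<in> (\<lambda>x. x @ h x) ` D"
    then obtain x y where xy: "x \<in> D" "y \<in> D" "z = x @ h x" "w = y @ h y" by auto
    then have l: "length x = n" "length y = n" by (auto simp: D_def)
    have "map2 (+) z w = map2 (+) x y @ h (map2 (+) x y)"
      using xy l by (simp add: hadd)
    moreover have "map2 (+) x y \<in> D" using l by (simp add: D_def)
    ultimately show "map2 (+) z w \<in> (\<lambda>x. x @ h x) ` D" by blast
  next
    fix c and z assume "z \<in> (\<lambda>x. x @ h x) ` D"
    then obtain x where x: "x \<in> D" "z = x @ h x" by auto
    then have "map ((*) c) z = map ((*) c) x @ h (map ((*) c) x)" by (simp add: hsmul D_def)
    moreover have "map ((*) c) x \<in> D" using x by (simp add: D_def)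
    ultimately show "map ((*) c) z \<in> (\<lambda>x. x @ h x) ` D" by blast
  qed
  have "is_AOA p n n (UNIV::'a set) {y. length y = n - p} B"
    unfolding is_AOA_def
  proof (intro conjI allI impI ballI)
    show "1 \<le> p" "p \<le> n" "n \<le> n" using p1 pn by auto
    show "is_OA n n UNIV (map fst B)" using OA mapfst by simp
    show "finite {y::'a list. length y = n - p}" using finY mdef by (simp add: Y_def)
    show "card {y::'a list. length y = n - p} = card (UNIV::'a set) ^ (n - p)" using cardY mdef by (simp add: Y_def)
    fix r assume "r \<in> set B" then show "snd r \<in> {y. length y = n - p}"
      using L hlen mdef by (auto simp: B_def D_def)
  next
    fix S :: "nat set" and u :: "nat \<Rightarrow> 'a" and y :: "'a list" assume S: "S \<subseteq> {0..<n} \<and> card S = p" and u: "u \<in> S \<rightarrow>\<^sub>E UNIV"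
      and y: "y \<in> {y::'a list. length y = n - p}"
    have "length (filter (\<lambda>r. (\<forall>i\<in>S. fst r ! i = u i) \<and> snd r = y) B)
        = card {x\<in>D. (\<forall>i\<in>S. x!i = u i) \<and> h x = y}"
      by (simp add: B_def cnt comp_def)
    also have "\<dots> = 1" using one[of S u y] S u y mdef by (simp add: Y_def)
    finally show "length (filter (\<lambda>r. (\<forall>i\<in>S. fst r ! i = u i) \<and> snd r = y) B) = 1" .
  qed
  then have "linear_AOA p n n B" using LS by (simp add: linear_AOA_def)
  then show ?thesis by blast
qed

theorem theorem3p4:
  fixes s t :: nat
  assumes "1 \<le> s" and "s < t"
    and "\<exists>A :: 'a::{finite,field} list list. linear_OA s t A"
  shows "(\<exists>B :: ('a list \<times> 'a list) list. linear_AOA s t t B) \<and>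
         (\<exists>B :: ('a list \<times> 'a list) list. linear_AOA (t - s) t t B)"
proof -
  note s1 = assms(1) and st = assms(2)
  obtain A :: "'a list list" where lin: "linear_OA s t A" using assms(3) by blast
  define C where "C = set A"
  have OA: "is_OA s t (UNIV::'a set) A" and LS: "lin_subspace t C"
    and cardC: "card C = card (UNIV::'a set) ^ s"
    using lin unfolding linear_OA_def C_def by blast+
  have lenA: "length A = card (UNIV::'a set) ^ s" using OA by (simp add: is_OA_def)
  have distA: "distinct A" using cardC lenA by (intro card_distinct) (simp add: C_def)
  have Clen: "\<And>c. c \<in> C \<Longrightarrow> length c = t" using LS by (simp add: lin_subspace_def)
  have C0: "replicate t 0 \<in> C" using LS by (simp add: lin_subspace_def)
  have Cadd: "\<And>x y. x \<in> C \<Longrightarrow> y \<in> C \<Longrightarrow> map2 (+) x y \<in> C" using LS by (simp add: lin_subspace_def)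
  have Csmul: "\<And>c x. x \<in> C \<Longrightarrow> map ((*) c) x \<in> C" using LS by (simp add: lin_subspace_def)
  have ex1: "\<exists>!c. c \<in> C \<and> (\<forall>i\<in>S. c!i = f i)"
    if S: "S \<subseteq> {0..<t}" "card S = s" for S and f :: "nat \<Rightarrow> 'a"
  proof -
    have u: "restrict f S \<in> S \<rightarrow>\<^sub>E UNIV" by simp
    have "length (filter (\<lambda>r. \<forall>i\<in>S. r ! i = restrict f S i) A) = 1"
    proof -
      have "\<forall>S. S \<subseteq> {0..<t} \<and> card S = s \<longrightarrow>
        (\<forall>u \<in> S \<rightarrow>\<^sub>E (UNIV::'a set). length (filter (\<lambda>r. \<forall>i\<in>S. r ! i = u i) A) = 1)"
        using OA unfolding is_OA_def by (elim conjE) assumption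
      then show ?thesis using S u by blast
    qed
    moreover have "length (filter (\<lambda>r. \<forall>i\<in>S. r ! i = restrict f S i) A)
       = card ({r. \<forall>i\<in>S. r ! i = restrict f S i} \<inter> set A)"
      by (rule distinct_length_filter[OF distA])
    moreover have "{r. \<forall>i\<in>S. r ! i = restrict f S i} \<inter> set A = {c. c \<in> C \<and> (\<forall>i\<in>S. c!i = f i)}"
      unfolding C_def by auto
    ultimately have "card {c. c \<in> C \<and> (\<forall>i\<in>S. c!i = f i)} = 1"
      by argo
    then obtain c where "{c. c \<in> C \<and> (\<forall>i\<in>S. c!i = f i)} = {c}" by (rule card_1_singletonE)
    then have H: "\<And>d. (d \<in> C \<and> (\<forall>i\<in>S. d!i = f i)) \<longleftrightarrow> d = c" by (simp add: set_eq_iff)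
    show ?thesis
    proof (rule ex1I[of _ c])
      show "c \<in> C \<and> (\<forall>i\<in>S. c!i = f i)" using H[of c] by simp
      fix d assume "d \<in> C \<and> (\<forall>i\<in>S. d!i = f i)" then show "d = c" using H[of d] by simp
    qed
  qed
  have S0: "{0..<s} \<subseteq> {0..<t}" "card {0..<s} = s" using st by auto
  define \<pi> where "\<pi> x = (THE c. c \<in> C \<and> (\<forall>i\<in>{0..<s}. c!i = x!i))" for x :: "'a list"
  have \<pi>prop: "\<pi> x \<in> C \<and> (\<forall>i\<in>{0..<s}. \<pi> x!i = x!i)" for x
    unfolding \<pi>_def by (rule theI'[OF ex1[OF S0]])
  have \<pi>uniq: "\<pi> x = c" if "c \<in> C" "\<forall>i<s. c!i = x!i" for x c
    unfolding \<pi>_def by (rule the1_equality[OF ex1[OF S0]]) (use that in auto)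
  have \<pi>len: "length (\<pi> x) = t" for x using \<pi>prop Clen by blast
  have \<pi>add: "\<pi> (map2 (+) x y) = map2 (+) (\<pi> x) (\<pi> y)" if "length x = t" "length y = t" for x y
  proof (rule \<pi>uniq)
    show "map2 (+) (\<pi> x) (\<pi> y) \<in> C" using \<pi>prop Cadd by blast
    show "\<forall>i<s. map2 (+) (\<pi> x) (\<pi> y) ! i = map2 (+) x y ! i"
    proof (intro allI impI)
      fix i assume i: "i < s"
      then have "i < t" using st by simp
      then show "map2 (+) (\<pi> x) (\<pi> y) ! i = map2 (+) x y ! i"
        using \<pi>prop[of x] \<pi>prop[of y] i that \<pi>len by simp
    qed
  qed
  have \<pi>smul: "\<pi> (map ((*) c) x) = map ((*) c) (\<pi> x)" if "length x = t" for x c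
  proof (rule \<pi>uniq)
    show "map ((*) c) (\<pi> x) \<in> C" using \<pi>prop Csmul by blast
    show "\<forall>i<s. map ((*) c) (\<pi> x) ! i = map ((*) c) x ! i"
    proof (intro allI impI)
      fix i assume i: "i < s"
      then have "i < t" using st by simp
      then show "map ((*) c) (\<pi> x) ! i = map ((*) c) x ! i"
        using \<pi>prop[of x] i that \<pi>len by simp
    qed
  qed
  have minus0: "a = b" if "a + -1 * b = 0" for a b :: 'a
    using that by (simp add: add_eq_0_iff)
  have \<pi>C: "\<pi> c = c" if "c \<in> C" for c using \<pi>uniq[OF that] by simp
  have zero_unique: "x = replicate t 0"
    if S: "S \<subseteq> {0..<t}" "card S = s" and xC: "x \<in> C" and x0: "\<forall>i\<in>S. x!i = 0" for S x
  proof -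
    have "replicate t 0 \<in> C \<and> (\<forall>i\<in>S. replicate t 0 ! i = (0::'a))" using C0 S by auto
    moreover have "x \<in> C \<and> (\<forall>i\<in>S. x ! i = (0::'a))" using xC x0 by simp
    ultimately show ?thesis using ex1[OF S, of "\<lambda>_. 0"] by blast
  qed
  define h1 where "h1 x = drop s (map2 (+) x (map ((*) (-1)) (\<pi> x)))" for x :: "'a list"
  have part1: "\<exists>B :: ('a list \<times> 'a list) list. linear_AOA s t t B"
  proof (rule gen[where h = h1])
    show "1 \<le> s" "s \<le> t" "t - s = t - s" using s1 st by auto
    show "length (h1 x) = t - s" if "length x = t" for x using that \<pi>len by (simp add: h1_def)
    show "h1 (map2 (+) x y) = map2 (+) (h1 x) (h1 y)" if l: "length x = t" "length y = t" for x y
      unfolding h1_def \<pi>add[OF l] using l \<pi>len by (intro nth_equalityI) (auto simp: algebra_simps)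
    show "h1 (map ((*) c) x) = map ((*) c) (h1 x)" if l: "length x = t" for c x
      unfolding h1_def \<pi>smul[OF l] using l \<pi>len by (intro nth_equalityI) (auto simp: algebra_simps)
    show "x = replicate t 0"
      if S: "S \<subseteq> {0..<t}" "card S = s" and l: "length x = t" and x0: "\<forall>i\<in>S. x!i = 0"
        and hx: "h1 x = replicate (t - s) 0" for S x
    proof -
      have "x = \<pi> x"
      proof (rule nth_equalityI)
        show "length x = length (\<pi> x)" using l \<pi>len by simp
        fix k assume k: "k < length x"
        show "x ! k = \<pi> x ! k"
        proof (cases "k < s")
          case True then show ?thesis using \<pi>prop[of x] by simp
        next
          case False
          then have "h1 x ! (k - s) = 0" using hx k l by simp
          then have "x!k + -1 * \<pi> x ! k = 0" using False k l \<pi>len by (simp add: h1_def)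
          then show ?thesis by (rule minus0)
        qed
      qed
      then have "x \<in> C" using \<pi>prop[of x] by simp
      then show ?thesis using zero_unique[OF S _ x0] by simp
    qed
  qed
  define \<delta> where "\<delta> j = map (\<lambda>i. if i = j then (1::'a) else 0) [0..<t]" for j
  define e where "e j = \<pi> (\<delta> j)" for j
  define ip where "ip x y = (\<Sum>i<t. x!i * y!i)" for x y :: "'a list"
  define h2 where "h2 x = map (\<lambda>j. ip x (e j)) [0..<s]" for x
  have \<delta>len: "length (\<delta> j) = t" for j by (simp add: \<delta>_def)
  have ip_add1: "ip (map2 (+) x y) c = ip x c + ip y c" if "length x = t" "length y = t" for x y c
    unfolding ip_def by (simp add: that sum.distrib[symmetric] distrib_right)
  have ip_smul1: "ip (map ((*) a) x) c = a * ip x c" if "length x = t" for a x c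
    unfolding ip_def by (simp add: that sum_distrib_left mult.assoc)
  have ip_add2: "ip x (map2 (+) y z) = ip x y + ip x z" if "length y = t" "length z = t" for x y z
    unfolding ip_def by (simp add: that sum.distrib[symmetric] distrib_left)
  have ip_smul2: "ip x (map ((*) a) y) = a * ip x y" if "length y = t" for a x y
    unfolding ip_def by (simp add: that sum_distrib_left algebra_simps)
  have ip_zero2: "ip x (replicate t 0) = 0" for x unfolding ip_def by simp
  have tts: "t - (t - s) = s" using st by simp
  have part2: "\<exists>B :: ('a list \<times> 'a list) list. linear_AOA (t - s) t t B"
  proof (rule gen[where h = h2 and m = "t - (t - s)"])
    show "1 \<le> t - s" "t - s \<le> t" "t - (t - s) = t - (t - s)" using s1 st by auto
    show "length (h2 x) = t - (t - s)" if "length x = t" for x using tts by (simp add: h2_def)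
    show "h2 (map2 (+) x y) = map2 (+) (h2 x) (h2 y)" if l: "length x = t" "length y = t" for x y
      unfolding h2_def using l by (intro nth_equalityI) (auto simp: ip_add1)
    show "h2 (map ((*) c) x) = map ((*) c) (h2 x)" if l: "length x = t" for c x
      unfolding h2_def using l by (intro nth_equalityI) (auto simp: ip_smul1)
    show "x = replicate t 0"
      if T: "T \<subseteq> {0..<t}" "card T = t - s" and l: "length x = t" and x0: "\<forall>i\<in>T. x!i = 0"
        and hx: "h2 x = replicate (t - (t - s)) 0" for T x
    proof -
      have ipe: "ip x (e j) = 0" if "j < s" for j
      proof -
        have "h2 x ! j = 0" using hx that tts by simp
        then show ?thesis using that by (simp add: h2_def)
      qed
      have orth: "ip x c = 0" if cC: "c \<in> C" for c
      proof -
        define w where "w k = map (\<lambda>i. if i < k then c!i else 0) [0..<t]" for k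
        have wlen: "length (w k) = t" for k by (simp add: w_def)
        have claim: "k \<le> s \<Longrightarrow> ip x (\<pi> (w k)) = 0" for k
        proof (induction k)
          case 0
          have "w 0 = replicate t 0" by (simp add: w_def map_replicate_const)
          then show ?case using \<pi>C[OF C0] ip_zero2 by simp
        next
          case (Suc k)
          have "w (Suc k) = map2 (+) (w k) (map ((*) (c!k)) (\<delta> k))"
          proof (rule nth_equalityI)
            fix i assume "i < length (w (Suc k))"
            then show "w (Suc k) ! i = map2 (+) (w k) (map ((*) (c!k)) (\<delta> k)) ! i"
              by (cases "i = k") (auto simp: w_def \<delta>_def)
          qed (simp add: w_def \<delta>_def)
          then have "\<pi> (w (Suc k)) = map2 (+) (\<pi> (w k)) (map ((*) (c!k)) (e k))"
            by (simp add: \<pi>add wlen \<delta>len \<pi>smul e_def)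
          then have "ip x (\<pi> (w (Suc k))) = ip x (\<pi> (w k)) + c!k * ip x (e k)"
            by (simp add: ip_add2 ip_smul2 \<pi>len e_def)
          then show ?case using Suc ipe[of k] by simp
        qed
        have "\<pi> (w s) = c"
          by (rule \<pi>uniq[OF cC]) (use st in \<open>auto simp: w_def\<close>)
        then show ?thesis using claim[of s] by simp
      qed
      have "x ! k = 0" if k: "k < t" for k
      proof (cases "k \<in> T")
        case True then show ?thesis using x0 by simp
      next
        case False
        define S where "S = {0..<t} - T"
        have S: "S \<subseteq> {0..<t}" "card S = s"
          using T tts by (auto simp: S_def card_Diff_subset finite_subset)
        have kS: "k \<in> S" using k False by (simp add: S_def)
        obtain c where c: "c \<in> C" "\<forall>i\<in>S. c!i = (if i = k then 1 else 0)"
          using ex1[OF S, of "\<lambda>i. if i = k then 1 else 0"] by blast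
        have "ip x c = (\<Sum>i<t. if i = k then x!k else 0)"
          unfolding ip_def
        proof (rule sum.cong)
          fix i assume "i \<in> {..<t}"
          then have "i < t" by simp
          show "x!i * c!i = (if i = k then x!k else 0)"
          proof (cases "i \<in> T")
            case True then show ?thesis using x0 False by auto
          next
            case False then have "i \<in> S" using \<open>i < t\<close> by (simp add: S_def)
            then show ?thesis using c(2) by auto
          qed
        qed simp
        also have "\<dots> = x!k" using k by simp
        finally show ?thesis using orth[OF c(1)] by simp
      qed
      then show ?thesis using l by (intro nth_equalityI) auto
    qed
  qed
  show ?thesis using part1 part2 by blast
qed

end
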